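(* Let $(X,d)$ be a metric space with $|X|=n$ and $k\in[n]$. The procedure $\mathtt{recMSD}(X,k)$ runs in time $n^{O(1)}$.
   Context: $\operatorname{diam}(S)=\max_{p,q\in S}d(p,q)$, $\operatorname{Ball}(x,R)=\{z\in X:d(x,z)\le R\}$, and the cost of a collection of clusters is the sum of their diameters. The randomized procedure $\mathtt{recMSD}(S,t)$ (for nonempty $S\subseteq X$, $t\in[k]$) is: set $\mathcal{C}_i\gets\{S\}$ for all $i\in\{1,\dots,t\}$; if $t=1$ or $|S|=1$, return $(\mathcal{C}_1,\dots,\mathcal{C}_t)$. Otherwise let $x,y\in S$ with $d(x,y)=\operatorname{diam}(S)$, choose $R\in[0,\operatorname{diam}(S)]$ uniformly at random, let $S_1=S\cap\operatorname{Ball}(x,R)$ and $S_2=S\setminus\operatorname{Ball}(x,R)$, compute $\mathcal{A}=\mathtt{recMSD}(S_1,t-1)$ and $\mathcal{B}=\mathtt{recMSD}(S_2,t-1)$; then for all $i,j\in\{1,\dots,t-1\}$ with $i+j\le t$, if $\operatorname{cost}(\mathcal{A}_i\cup\mathcal{B}_j)<\operatorname{cost}(\mathcal{C}_{i+j})$ set $\mathcal{C}_{i+j}\gets\mathcal{A}_i\cup\mathcal{B}_j$. Return $(\mathcal{C}_1,\dots,\mathcal{C}_t)$. *)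

theory Defs
  imports Complex_Main
begin

definition metric_on :: "'a set \<Rightarrow> ('a \<Rightarrow> 'a \<Rightarrow> real) \<Rightarrow> bool" where
  "metric_on X d \<longleftrightarrow>
     (\<forall>x\<in>X. \<forall>y\<in>X. d x y \<ge> 0 \<and> (d x y = 0 \<longleftrightarrow> x = y) \<and> d x y = d y x) \<and>
     (\<forall>x\<in>X. \<forall>y\<in>X. \<forall>z\<in>X. d x z \<le> d x y + d y z)"

definition diam :: "('a \<Rightarrow> 'a \<Rightarrow> real) \<Rightarrow> 'a set \<Rightarrow> real" where
  "diam d S = (if S = {} then 0 else Max {d p q | p q. p \<in> S \<and> q \<in> S})"

definition Ball_d :: "'a set \<Rightarrow> ('a \<Rightarrow> 'a \<Rightarrow> real) \<Rightarrow> 'a \<Rightarrow> real \<Rightarrow> 'a set" where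
  "Ball_d X d x R = {z \<in> X. d x z \<le> R}"

definition cost :: "('a \<Rightarrow> 'a \<Rightarrow> real) \<Rightarrow> 'a set set \<Rightarrow> real" where
  "cost d \<C> = (\<Sum>C\<in>\<C>. diam d C)"

text \<open>Unit-cost RAM model: number of elementary steps needed to evaluate cost d \<C>
  (all pairwise distances inside each cluster, plus one step per cluster).\<close>
definition cost_time :: "'a set set \<Rightarrow> nat" where
  "cost_time \<C> = (\<Sum>C\<in>\<C>. (card C)^2 + 1)"

definition combine_step ::
  "('a \<Rightarrow> 'a \<Rightarrow> real) \<Rightarrow> (nat \<Rightarrow> 'a set set) \<Rightarrow> (nat \<Rightarrow> 'a set set)
    \<Rightarrow> (nat \<Rightarrow> 'a set set) \<times> nat \<Rightarrow> nat \<times> nat \<Rightarrow> (nat \<Rightarrow> 'a set set) \<times> nat" where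
  "combine_step d A B st ij =
     (let C = fst st; T = snd st; i = fst ij; j = snd ij; U = A i \<union> B j;
          T' = T + card (A i) + card (B j) + cost_time U + cost_time (C (i+j)) + 1
      in if cost d U < cost d (C (i+j)) then (C((i+j) := U), T') else (C, T'))"

definition combine ::
  "('a \<Rightarrow> 'a \<Rightarrow> real) \<Rightarrow> nat \<Rightarrow> 'a set \<Rightarrow> (nat \<Rightarrow> 'a set set) \<Rightarrow> (nat \<Rightarrow> 'a set set)
    \<Rightarrow> (nat \<Rightarrow> 'a set set) \<times> nat" where
  "combine d t S A B =
     foldl (combine_step d A B) (\<lambda>_. {S}, 0)
       [(i, j). i \<leftarrow> [1..<t], j \<leftarrow> [1..<t], i + j \<le> t]"

text \<open>msd_run X d S t C T: some execution of recMSD(S,t) (over all random radii R and all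
  choices of the diametral pair x,y) returns (C_1,...,C_t) (C i for i in 1..t) and takes
  T elementary steps.  Step counts: t for initialising C_1..C_t, 1 for the base test,
  card S^2 for finding a diametral pair, 1 for drawing R, card S for splitting,
  plus the recursive calls and the combination loop.\<close>
inductive msd_run :: "'a set \<Rightarrow> ('a \<Rightarrow> 'a \<Rightarrow> real) \<Rightarrow> 'a set \<Rightarrow> nat
    \<Rightarrow> (nat \<Rightarrow> 'a set set) \<Rightarrow> nat \<Rightarrow> bool" for X d where
  base: "t = 1 \<or> card S \<le> 1 \<Longrightarrow> msd_run X d S t (\<lambda>_. {S}) (t + 1)"
| step: "\<lbrakk> 2 \<le> t; card S > 1; x \<in> S; y \<in> S; d x y = diam d S;
          0 \<le> R; R \<le> diam d S;
          msd_run X d (S \<inter> Ball_d X d x R) (t - 1) A TA;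
          msd_run X d (S - Ball_d X d x R) (t - 1) B TB;
          combine d t S A B = (C, TL) \<rbrakk>
       \<Longrightarrow> msd_run X d S t C (t + 1 + (card S)^2 + 1 + card S + TA + TB + TL)"

end

theory Submission imports Defs begin

definition good :: "'a set \<Rightarrow> 'a set set \<Rightarrow> bool" where
  "good S Cs \<longleftrightarrow> finite Cs \<and> (\<forall>c\<in>Cs. c \<subseteq> S) \<and> pairwise disjnt Cs"

lemma good_bounds:
  assumes "finite S" "good S Cs"
  shows "card Cs \<le> card S + 1" "cost_time Cs \<le> card S ^ 2 + card S + 1"
proof -
  have fin: "finite Cs" and sub: "\<forall>c\<in>Cs. c \<subseteq> S" and pd: "pairwise disjnt Cs"
    using assms(2) unfolding good_def by auto
  have finc: "\<forall>c\<in>Cs. finite c" using sub assms(1) finite_subset by blast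
  have "sum card Cs = card (\<Union>Cs)"
    using card_Union_disjoint[OF pd] finc by simp
  also have "\<dots> \<le> card S" using sub assms(1) by (intro card_mono) auto
  finally have sc: "sum card Cs \<le> card S" .
  have "card (Cs - {{}}) = (\<Sum>c\<in>Cs - {{}}. 1)" by simp
  also have "\<dots> \<le> (\<Sum>c\<in>Cs - {{}}. card c)"
    using finc by (intro sum_mono) (auto simp: Suc_le_eq card_gt_0_iff)
  also have "\<dots> \<le> sum card Cs" using fin by (intro sum_mono2) auto
  finally have "card (Cs - {{}}) \<le> card S" using sc by linarith
  moreover have "card Cs \<le> card (Cs - {{}}) + 1"
    using card_Diff_singleton_if[of Cs "{}"] fin by (cases "{} \<in> Cs") (auto simp: card_gt_0_iff)
  ultimately show cc: "card Cs \<le> card S + 1" by linarith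
  have "(\<Sum>c\<in>Cs. card c ^ 2) \<le> (\<Sum>c\<in>Cs. card c * card S)"
    using sub assms(1) by (intro sum_mono) (auto simp: power2_eq_square card_mono)
  also have "\<dots> = card S * sum card Cs" by (simp add: sum_distrib_left mult.commute)
  also have "\<dots> \<le> card S ^ 2" using sc by (simp add: power2_eq_square)
  finally have "(\<Sum>c\<in>Cs. card c ^ 2) \<le> card S ^ 2" .
  moreover have "cost_time Cs = (\<Sum>c\<in>Cs. card c ^ 2) + card Cs"
    unfolding cost_time_def sum.distrib by simp
  ultimately show "cost_time Cs \<le> card S ^ 2 + card S + 1" using cc by linarith
qed

lemma foldl_inv:
  assumes "\<And>C T ij. P C \<Longrightarrow> P (fst (f (C, T) ij)) \<and> snd (f (C, T) ij) \<le> T + K"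
  shows "P C0 \<Longrightarrow> P (fst (foldl f (C0, T0) xs)) \<and> snd (foldl f (C0, T0) xs) \<le> T0 + length xs * K"
proof (induction xs arbitrary: C0 T0)
  case Nil then show ?case by simp
next
  case (Cons a xs)
  obtain C1 T1 where e: "f (C0, T0) a = (C1, T1)" by fastforce
  have "P C1" "T1 \<le> T0 + K" using assms[OF Cons.prems, of T0 a] e by auto
  with Cons.IH[of C1 T1] e show ?case by auto
qed

lemma len_concat_map: "(\<And>x. x \<in> set xs \<Longrightarrow> length (f x) \<le> K) \<Longrightarrow> length (concat (map f xs)) \<le> length xs * K"
  by (induction xs) (auto simp: add_mono)

lemma len_list: "length [(i, j). i \<leftarrow> [1..<t], j \<leftarrow> [1..<t], i + j \<le> (t::nat)] \<le> t ^ 2"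
proof -
  have "length [(i, j). i \<leftarrow> [1..<t], j \<leftarrow> [1..<t], i + j \<le> (t::nat)] \<le> length [1..<t] * (length [1..<t] * 1)"
    apply (rule len_concat_map)
    apply (rule len_concat_map)
    by simp
  also have "\<dots> \<le> t * t" by (simp add: mult_mono)
  finally show ?thesis by (simp add: power2_eq_square)
qed

lemma arith_main:
  fixes t s s1 s2 TA TB TL :: nat
  assumes "2 \<le> t" "2 \<le> s" "s1 + s2 = s"
    "TA \<le> 12 * (t-1)^3 * s1^2 + 2*(t-1) + 1"
    "TB \<le> 12 * (t-1)^3 * s2^2 + 2*(t-1) + 1"
    "TL \<le> t^2 * (2*s^2 + 4*s + 5)"
  shows "t + 1 + s^2 + 1 + s + TA + TB + TL \<le> 12 * t^3 * s^2 + 2*t + 1"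
proof -
  obtain u where u: "t = u + 1" "1 \<le> u" using assms(1) by (intro that[of "t - 1"]) auto
  have sq: "s1^2 + s2^2 \<le> s^2" unfolding assms(3)[symmetric] power2_sum by simp
  have "12 * u^3 * s1^2 + 12 * u^3 * s2^2 \<le> 12 * u^3 * s^2"
    using sq by (metis add_mult_distrib2 mult_le_mono2)
  moreover have "TA + TB \<le> 12 * u^3 * s1^2 + 12 * u^3 * s2^2 + 4*u + 2" using assms(4,5) u by simp
  ultimately have tab: "TA + TB \<le> 12 * u^3 * s^2 + 4*u + 2" by linarith
  have s2s: "2 * s \<le> s^2" using assms(2) by (simp add: power2_eq_square)
  have s4: "4 \<le> s^2" using assms(2) mult_le_mono[OF assms(2) assms(2)] by (simp add: power2_eq_square)
  have K: "2*s^2 + 4*s + 5 \<le> 6 * s^2" using s2s s4 by linarith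
  have tl0: "TL \<le> t^2 * (6*s^2)" using assms(6) mult_le_mono2[OF K, of "t^2"] by linarith
  have tl: "TL \<le> 6 * (u+1)^2 * s^2" using tl0 u by (simp add: ac_simps)
  have us: "u \<le> u * s^2" using s4 by simp
  have "t + 1 + s^2 + 1 + s + TA + TB + TL \<le> u + 3 + s^2 + s + 12 * u^3 * s^2 + 4*u + 2 + 6 * (u+1)^2 * s^2"
    using tab tl u by linarith
  also have "\<dots> \<le> 12 * (u+1)^3 * s^2 + 2*u + 3"
  proof -
    have e1: "12 * (u+1)^3 * s^2 = 12 * (u^3 * s^2) + 36 * (u^2 * s^2) + 36 * (u * s^2) + 12 * s^2"
      by (simp add: power2_eq_square power3_eq_cube algebra_simps)
    have e2: "6 * (u+1)^2 * s^2 = 6 * (u^2 * s^2) + 12 * (u * s^2) + 6 * s^2"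
      by (simp add: power2_eq_square algebra_simps)
    have e3: "12 * u^3 * s^2 = 12 * (u^3 * s^2)" by simp
    show ?thesis unfolding e1 e2 e3 using us s2s s4 by linarith
  qed
  finally show ?thesis using u by simp
qed

lemma good_single: "good S {S}" unfolding good_def by simp

lemma good_mono: "good S1 A \<Longrightarrow> S1 \<subseteq> S \<Longrightarrow> good S A"
  unfolding good_def by (meson order_trans)

lemma good_union:
  assumes "good S1 A" "good S2 B" "S1 \<inter> S2 = {}" "S1 \<subseteq> S" "S2 \<subseteq> S"
  shows "good S (A \<union> B)"
proof -
  have pA: "pairwise disjnt A" and sA: "\<forall>c\<in>A. c \<subseteq> S1" and fA: "finite A"
    using assms(1) unfolding good_def by auto
  have pB: "pairwise disjnt B" and sB: "\<forall>c\<in>B. c \<subseteq> S2" and fB: "finite B"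
    using assms(2) unfolding good_def by auto
  have "pairwise disjnt (A \<union> B)"
    unfolding pairwise_def
  proof (intro ballI impI)
    fix a b assume a: "a \<in> A \<union> B" and b: "b \<in> A \<union> B" and ne: "a \<noteq> b"
    show "disjnt a b"
    proof (cases "a \<in> A")
      case True
      show ?thesis
      proof (cases "b \<in> A")
        case True then show ?thesis using pA \<open>a \<in> A\<close> ne unfolding pairwise_def by blast
      next
        case False
        then have "b \<subseteq> S2" using b sB by blast
        moreover have "a \<subseteq> S1" using \<open>a \<in> A\<close> sA by blast
        ultimately show ?thesis using assms(3) unfolding disjnt_def by blast
      qed
    next
      case False
      then have aB: "a \<in> B" using a by blast
      show ?thesis
      proof (cases "b \<in> B")
        case True then show ?thesis using pB aB ne unfolding pairwise_def by blast
      next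
        case False
        then have "b \<subseteq> S1" using b sA by blast
        moreover have "a \<subseteq> S2" using aB sB by blast
        ultimately show ?thesis using assms(3) unfolding disjnt_def by blast
      qed
    qed
  qed
  moreover have "\<forall>c\<in>A \<union> B. c \<subseteq> S" using sA sB assms(4,5) by blast
  ultimately show ?thesis using fA fB unfolding good_def by blast
qed

lemma combine_good:
  assumes "finite S" "S1 \<subseteq> S" "S2 \<subseteq> S" "S1 \<inter> S2 = {}"
    "\<forall>i. good S1 (A i)" "\<forall>j. good S2 (B j)" "combine d t S A B = (C, TL)"
  shows "(\<forall>m. good S (C m)) \<and> TL \<le> t^2 * (2*card S^2 + 4*card S + 5)"
proof -
  let ?s = "card S"
  let ?P = "\<lambda>C. \<forall>m. good S (C m)"
  let ?xs = "[(i, j). i \<leftarrow> [1..<t], j \<leftarrow> [1..<t], i + j \<le> t]"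
  have gA: "\<And>i. good S (A i)" using assms(2,5) good_mono by blast
  have gB: "\<And>j. good S (B j)" using assms(3,6) good_mono by blast
  have stp: "?P (fst (combine_step d A B (C, T) ij)) \<and> snd (combine_step d A B (C, T) ij) \<le> T + (2*?s^2 + 4*?s + 5)"
    if "?P C" for C T ij
  proof -
    obtain i j where ij: "ij = (i, j)" by fastforce
    have gU: "good S (A i \<union> B j)" by (rule good_union[OF spec[OF assms(5), of i] spec[OF assms(6), of j] assms(4) assms(2) assms(3)])
    have b1: "card (A i) \<le> ?s + 1" by (rule good_bounds(1)[OF assms(1) gA[of i]])
    have b2: "card (B j) \<le> ?s + 1" by (rule good_bounds(1)[OF assms(1) gB[of j]])
    have b3: "cost_time (A i \<union> B j) \<le> ?s^2 + ?s + 1" using good_bounds(2)[OF assms(1) gU] .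
    have b4: "cost_time (C (i+j)) \<le> ?s^2 + ?s + 1" using good_bounds(2)[OF assms(1) spec[OF that, of "i+j"]] by simp
    define T' where "T' = T + card (A i) + card (B j) + cost_time (A i \<union> B j) + cost_time (C (i+j)) + 1"
    have e: "combine_step d A B (C, T) ij = (if cost d (A i \<union> B j) < cost d (C (i+j)) then (C((i+j) := A i \<union> B j), T') else (C, T'))"
      unfolding combine_step_def ij Let_def T'_def by simp
    have tb: "T' \<le> T + (2*?s^2 + 4*?s + 5)" unfolding T'_def using b1 b2 b3 b4 by linarith
    have p1: "?P (C((i+j) := A i \<union> B j))" using that gU by simp
    show ?thesis unfolding e using tb p1 that by simp
  qed
  have H: "?P (fst (foldl (combine_step d A B) (\<lambda>_. {S}, 0) ?xs)) \<and>
        snd (foldl (combine_step d A B) (\<lambda>_. {S}, 0) ?xs) \<le> 0 + length ?xs * (2*?s^2 + 4*?s + 5)"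
    by (rule foldl_inv[where P = ?P, OF stp]) (auto simp: good_single)
  have L: "length ?xs * (2*?s^2 + 4*?s + 5) \<le> t^2 * (2*?s^2 + 4*?s + 5)"
    using len_list[of t] by (rule mult_le_mono1)
  have H2: "snd (foldl (combine_step d A B) (\<lambda>_. {S}, 0) ?xs) \<le> length ?xs * (2*?s^2 + 4*?s + 5)"
    using conjunct2[OF H] by simp
  have "?P (fst (combine d t S A B)) \<and> snd (combine d t S A B) \<le> t^2 * (2*?s^2 + 4*?s + 5)"
    unfolding combine_def using conjunct1[OF H] order_trans[OF H2 L] by blast
  then show ?thesis using assms(7) by simp
qed

lemma run_bound:
  "msd_run X d S t C T \<Longrightarrow> finite S \<Longrightarrow>
     (\<forall>m. good S (C m)) \<and> T \<le> 12 * t^3 * (card S)^2 + 2*t + 1"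
proof (induction rule: msd_run.induct)
  case (base t S)
  then show ?case by (simp add: good_single)
next
  case (step t S x y R A TA B TB C TL)
  let ?S1 = "S \<inter> Ball_d X d x R" and ?S2 = "S - Ball_d X d x R"
  have f1: "finite ?S1" "finite ?S2" using step.prems by auto
  note IH1 = step.IH(1)[OF f1(1)] and IH2 = step.IH(2)[OF f1(2)]
  have cmb: "(\<forall>m. good S (C m)) \<and> TL \<le> t^2 * (2*card S^2 + 4*card S + 5)"
  proof (rule combine_good[OF step.prems, of ?S1 ?S2 A B d t])
    show "?S1 \<subseteq> S" "?S2 \<subseteq> S" "?S1 \<inter> ?S2 = {}" by blast+
    show "\<forall>i. good ?S1 (A i)" using IH1 by blast
    show "\<forall>i. good ?S2 (B i)" using IH2 by blast
    show "combine d t S A B = (C, TL)" by (rule step.hyps(10))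
  qed
  have cs: "card ?S1 + card ?S2 = card S"
  proof -
    have "?S1 \<inter> ?S2 = {}" by blast
    from card_Un_disjoint[OF f1 this] have "card (?S1 \<union> ?S2) = card ?S1 + card ?S2" .
    moreover have "?S1 \<union> ?S2 = S" by blast
    ultimately show ?thesis by simp
  qed
  have "t + 1 + (card S)^2 + 1 + card S + TA + TB + TL \<le> 12 * t^3 * (card S)^2 + 2*t + 1"
  proof (rule arith_main[OF step.hyps(1) _ cs])
    show "2 \<le> card S" using step.hyps(2) by linarith
    show "TA \<le> 12 * (t - 1) ^ 3 * (card ?S1)\<^sup>2 + 2 * (t - 1) + 1" using IH1 by blast
    show "TB \<le> 12 * (t - 1) ^ 3 * (card ?S2)\<^sup>2 + 2 * (t - 1) + 1" using IH2 by blast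
    show "TL \<le> t\<^sup>2 * (2 * (card S)\<^sup>2 + 4 * card S + 5)" using cmb by blast
  qed
  then show ?case using cmb by simp
qed

theorem lemma3:
  shows "\<exists>c::nat. \<forall>(X::'a set) d n k C T.
     finite X \<and> card X = n \<and> metric_on X d \<and> 1 \<le> k \<and> k \<le> n \<and> msd_run X d X k C T
       \<longrightarrow> T \<le> c * n ^ c"
proof (intro exI[of _ 15] allI impI)
  fix X :: "'a set" and d n k C T
  assume h: "finite X \<and> card X = n \<and> metric_on X d \<and> 1 \<le> k \<and> k \<le> n \<and> msd_run X d X k C T"
  then have T: "T \<le> 12 * k^3 * n^2 + 2*k + 1" and kn: "1 \<le> k" "k \<le> n"
    using run_bound[of X d X k C T] by auto
  have n1: "1 \<le> n" using kn by linarith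
  have "12 * k^3 * n^2 \<le> 12 * n^3 * n^2" using kn by (simp add: power_mono)
  also have "\<dots> = 12 * n^5" by (simp add: power_add[symmetric])
  finally have a: "12 * k^3 * n^2 \<le> 12 * n^5" .
  have b: "n \<le> n^5" using n1 by (simp add: self_le_power)
  have c: "n^5 \<le> n^15" using n1 by (simp add: power_increasing)
  show "T \<le> 15 * n ^ 15" using T a b c kn by linarith
qed
end
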